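(* Let $i,j\ge1$ with $i+j=n$. Under the isomorphism $U(\mathfrak h_n)\cong U(\mathfrak h_i)\otimes U(\mathfrak h_j)$, the algebra $W^n$ is a subalgebra of $W^i\otimes W^j$.
   Context: For $m\ge1$, $U(\mathfrak h_m)$ is the associative superalgebra generated by odd elements $\xi_1,\dots,\xi_m$ with $\xi_a\xi_b+\xi_b\xi_a=0$ for $a\neq b$, $x_a=\xi_a^2$; it is the enveloping algebra of the Cartan subalgebra of $Q(m)$. $W^m\subset U(\mathfrak h_m)$ is the finite $W$-algebra of $Q(m)$ associated with the principal even nilpotent element, realized in $U(\mathfrak h_m)$ via the injective Harish-Chandra homomorphism; concretely it is the subalgebra generated by $u_k(0),u_k(1)$ ($1\le k\le m$), the even and odd parts of $\sum_{1\le i_1<\dots<i_k\le m}\prod_{l=1}^{k}(x_{i_l}+(-1)^{k-l}\xi_{i_l})$ (ordered product). The isomorphism $U(\mathfrak h_n)\cong U(\mathfrak h_i)\otimes U(\mathfrak h_j)$ (super tensor product) is induced by the embedding $Q(i)\oplus Q(j)\hookrightarrow Q(n)$: it sends $\xi_a\mapsto\xi_a\otimes1$ for $a\le i$ and $\xi_{i+b}\mapsto1\otimes\xi_b$ for $b\le j$. *)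

theory Defs
  imports Complex_Main "HOL-Library.Poly_Mapping"
begin

text \<open>Concrete model of U(h): the associative algebra over the complex numbers generated by
odd elements xi_a (a :: nat) with xi_a xi_b + xi_b xi_a = 0 for a ~= b.  A PBW basis is
given by monomials x^alpha xi_S (S a finite set, product taken in increasing order), where
x_a = xi_a^2 is central.
U(h_m) is the subalgebra of elements involving only xi_1,...,xi_m.\<close>

type_synonym hmono = "(nat \<Rightarrow>\<^sub>0 nat) \<times> nat set"
type_synonym uh = "hmono \<Rightarrow>\<^sub>0 complex"

text \<open>Product of basis monomials: xi_S xi_T = (-1)^inv(S,T) x^(S inter T) xi_(S symdiff T).\<close>
definition bkey :: "hmono \<Rightarrow> hmono \<Rightarrow> hmono" where
  "bkey p q = (fst p + fst q + (\<Sum>a\<in>snd p \<inter> snd q. Poly_Mapping.single a 1),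
               (snd p - snd q) \<union> (snd q - snd p))"

definition bsign :: "hmono \<Rightarrow> hmono \<Rightarrow> complex" where
  "bsign p q = (-1) ^ card {(s, t). s \<in> snd p \<and> t \<in> snd q \<and> t < s}"

definition hmul :: "uh \<Rightarrow> uh \<Rightarrow> uh" where
  "hmul f g = (\<Sum>p\<in>Poly_Mapping.keys f. \<Sum>q\<in>Poly_Mapping.keys g.
      Poly_Mapping.single (bkey p q) (Poly_Mapping.lookup f p * Poly_Mapping.lookup g q * bsign p q))"

definition hone :: uh where "hone = Poly_Mapping.single (0, {}) 1"

definition hscale :: "complex \<Rightarrow> uh \<Rightarrow> uh" where
  "hscale c f = Poly_Mapping.map (\<lambda>v. c * v) f"

definition xi :: "nat \<Rightarrow> uh" where "xi a = Poly_Mapping.single (0, {a}) 1"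
definition xsq :: "nat \<Rightarrow> uh" where "xsq a = hmul (xi a) (xi a)"

fun hprod :: "uh list \<Rightarrow> uh" where
  "hprod [] = hone"
| "hprod (f # fs) = hmul f (hprod fs)"

definition ufac :: "nat \<Rightarrow> nat set \<Rightarrow> uh" where
  "ufac k I = (let s = sorted_list_of_set I in
     hprod (map (\<lambda>l. xsq (s ! (l - 1)) + hscale ((-1) ^ (k - l)) (xi (s ! (l - 1)))) [1..<k+1]))"

definition ufull :: "nat \<Rightarrow> nat \<Rightarrow> uh" where
  "ufull m k = (\<Sum>I\<in>{I. I \<subseteq> {1..m} \<and> card I = k}. ufac k I)"

definition hpart :: "nat \<Rightarrow> uh \<Rightarrow> uh" where
  "hpart e f = (\<Sum>p\<in>{p\<in>Poly_Mapping.keys f. card (snd p) mod 2 = e}. Poly_Mapping.single p (Poly_Mapping.lookup f p))"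

definition u :: "nat \<Rightarrow> nat \<Rightarrow> nat \<Rightarrow> uh" where
  "u m k e = hpart e (ufull m k)"

inductive_set W :: "nat \<Rightarrow> uh set" for m :: nat where
  gen: "1 \<le> k \<Longrightarrow> k \<le> m \<Longrightarrow> e \<in> {0, 1} \<Longrightarrow> u m k e \<in> W m"
| one: "hone \<in> W m"
| add: "f \<in> W m \<Longrightarrow> g \<in> W m \<Longrightarrow> f + g \<in> W m"
| scale: "f \<in> W m \<Longrightarrow> hscale c f \<in> W m"
| mul: "f \<in> W m \<Longrightarrow> g \<in> W m \<Longrightarrow> hmul f g \<in> W m"

text \<open>Shift xi_b |-> xi_{i+b} (and x_b |-> x_{i+b}): the embedding U(h_j) -> U(h_n) as 1 (x) U(h_j).\<close>
definition shkey :: "nat \<Rightarrow> hmono \<Rightarrow> hmono" where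
  "shkey i p = ((\<Sum>a\<in>Poly_Mapping.keys (fst p). Poly_Mapping.single (i + a) (Poly_Mapping.lookup (fst p) a)), (\<lambda>a. i + a) ` snd p)"

definition sh :: "nat \<Rightarrow> uh \<Rightarrow> uh" where
  "sh i f = (\<Sum>p\<in>Poly_Mapping.keys f. Poly_Mapping.single (shkey i p) (Poly_Mapping.lookup f p))"

inductive_set hspan :: "uh set \<Rightarrow> uh set" for S :: "uh set" where
  zero: "0 \<in> hspan S"
| base: "f \<in> S \<Longrightarrow> f \<in> hspan S"
| add: "f \<in> hspan S \<Longrightarrow> g \<in> hspan S \<Longrightarrow> f + g \<in> hspan S"
| scale: "f \<in> hspan S \<Longrightarrow> hscale c f \<in> hspan S"

text \<open>Image of W^i (x) W^j under U(h_i) (x) U(h_j) ~= U(h_{i+j}), a (x) b |-> a * sh i b.\<close>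
definition Wtensor :: "nat \<Rightarrow> nat \<Rightarrow> uh set" where
  "Wtensor i j = hspan {hmul a (sh i b) | a b. a \<in> W i \<and> b \<in> W j}"

end

theory Submission
  imports Defs
begin

lemma lookup_hscale[simp]: "Poly_Mapping.lookup (hscale c f) p = c * Poly_Mapping.lookup f p"
  unfolding hscale_def by transfer (simp add: when_def)

lemma keys_hscale: "Poly_Mapping.keys (hscale c f) \<subseteq> Poly_Mapping.keys f"
  by (auto simp: in_keys_iff)

lemma hscale_add: "hscale c (f + g) = hscale c f + hscale c g"
  by (rule poly_mapping_eqI) (simp add: lookup_add algebra_simps)

lemma hscale_zero[simp]: "hscale c 0 = 0"
  by (rule poly_mapping_eqI) simp

lemma hscale_0[simp]: "hscale 0 f = 0"
  by (rule poly_mapping_eqI) simp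

lemma hscale_1[simp]: "hscale 1 f = f"
  by (rule poly_mapping_eqI) simp

lemma hscale_hscale[simp]: "hscale c (hscale d f) = hscale (c*d) f"
  by (rule poly_mapping_eqI) simp

lemma hscale_sum: "hscale c (sum F X) = (\<Sum>x\<in>X. hscale c (F x))"
  by (induction X rule: infinite_finite_induct) (auto simp: hscale_add)

lemma hscale_single: "hscale c (Poly_Mapping.single k a) = Poly_Mapping.single k (c*a)"
  by (rule poly_mapping_eqI) (simp add: lookup_single when_def)

lemma hscale_plus_left: "hscale (c+d) f = hscale c f + hscale d f"
  by (rule poly_mapping_eqI) (simp add: lookup_add algebra_simps)

definition lin :: "(hmono \<Rightarrow> complex \<Rightarrow> uh) \<Rightarrow> uh \<Rightarrow> uh" where
  "lin \<Phi> f = (\<Sum>p\<in>Poly_Mapping.keys f. \<Phi> p (Poly_Mapping.lookup f p))"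

definition addf :: "(hmono \<Rightarrow> complex \<Rightarrow> uh) \<Rightarrow> bool" where
  "addf \<Phi> \<longleftrightarrow> (\<forall>p a b. \<Phi> p (a+b) = \<Phi> p a + \<Phi> p b)"

lemma addfD: "addf \<Phi> \<Longrightarrow> \<Phi> p (a+b) = \<Phi> p a + \<Phi> p b"
  unfolding addf_def by blast

lemma addf_zero: "addf \<Phi> \<Longrightarrow> \<Phi> p 0 = 0"
  unfolding addf_def by (metis add_0 add_cancel_right_right)

lemma lin_repr:
  assumes "addf \<Phi>" "finite P" "Poly_Mapping.keys f \<subseteq> P"
  shows "lin \<Phi> f = (\<Sum>p\<in>P. \<Phi> p (Poly_Mapping.lookup f p))"
  unfolding lin_def
  by (rule sum.mono_neutral_left) (use assms addf_zero in \<open>auto simp: in_keys_iff\<close>)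

lemma lin_add:
  assumes "addf \<Phi>"
  shows "lin \<Phi> (f + g) = lin \<Phi> f + lin \<Phi> g"
proof -
  let ?P = "Poly_Mapping.keys f \<union> Poly_Mapping.keys g"
  have k: "Poly_Mapping.keys (f+g) \<subseteq> ?P" by (rule keys_add)
  show ?thesis
    using assms
    by (simp add: lin_repr[OF assms _ k] lin_repr[of \<Phi> ?P f] lin_repr[of \<Phi> ?P g]
        lookup_add addfD[OF assms] sum.distrib)
qed

lemma lin_zero[simp]: "lin \<Phi> 0 = 0"
  by (simp add: lin_def)

lemma lin_sum:
  assumes "addf \<Phi>"
  shows "lin \<Phi> (sum F X) = (\<Sum>x\<in>X. lin \<Phi> (F x))"
  by (induction X rule: infinite_finite_induct) (auto simp: lin_add[OF assms])

lemma lin_single: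
  assumes "addf \<Phi>"
  shows "lin \<Phi> (Poly_Mapping.single k c) = \<Phi> k c"
  using lin_repr[OF assms, of "{k}" "Poly_Mapping.single k c"] by simp

lemma lin_scale:
  assumes "addf \<Phi>" "\<And>p d. \<Phi> p (c*d) = hscale c (\<Phi> p d)"
  shows "lin \<Phi> (hscale c f) = hscale c (lin \<Phi> f)"
proof -
  have "lin \<Phi> (hscale c f) = (\<Sum>p\<in>Poly_Mapping.keys f. \<Phi> p (Poly_Mapping.lookup (hscale c f) p))"
    by (rule lin_repr[OF assms(1) _ keys_hscale]) simp
  then show ?thesis by (simp add: lin_def hscale_sum assms(2))
qed

lemma lin_cong_sum:
  "lin (\<lambda>p a. \<Psi>1 p a + \<Psi>2 p a) f = lin \<Psi>1 f + lin \<Psi>2 f"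
  by (simp add: lin_def sum.distrib)

lemma lin_hscale_fun:
  "lin (\<lambda>p a. hscale c (\<Psi> p a)) f = hscale c (lin \<Psi> f)"
  by (simp add: lin_def hscale_sum)

lemma lin_id: "lin Poly_Mapping.single f = f"
  by (rule poly_mapping_eqI) (auto simp: lin_def lookup_sum lookup_single when_def in_keys_iff)

definition M :: "hmono \<Rightarrow> complex \<Rightarrow> hmono \<Rightarrow> complex \<Rightarrow> uh" where
  "M p a q b = Poly_Mapping.single (bkey p q) (a * b * bsign p q)"

lemma addf_M: "addf (M p a)"
  by (simp add: addf_def M_def algebra_simps single_add)

lemma M_add: "M p (a + a') = (\<lambda>q b. M p a q b + M p a' q b)"
  by (simp add: fun_eq_iff M_def algebra_simps single_add)

lemma M_scale: "M p (c * a) = (\<lambda>q b. hscale c (M p a q b))"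
  by (simp add: fun_eq_iff M_def hscale_single algebra_simps)

lemma addf_outer: "addf (\<lambda>p a. lin (M p a) g)"
  by (simp add: addf_def M_add lin_cong_sum)

lemma hmul_lin: "hmul f g = lin (\<lambda>p a. lin (M p a) g) f"
  by (simp add: hmul_def lin_def M_def)

lemma hmul_add_left: "hmul (f + f') g = hmul f g + hmul f' g"
  by (simp add: hmul_lin lin_add[OF addf_outer])

lemma hmul_add_right: "hmul f (g + g') = hmul f g + hmul f g'"
  by (simp add: hmul_lin lin_add[OF addf_M] lin_cong_sum)

lemma hmul_zero_left[simp]: "hmul 0 g = 0"
  by (simp add: hmul_def)

lemma hmul_zero_right[simp]: "hmul f 0 = 0"
  by (simp add: hmul_def)

lemma hmul_sum_left: "hmul (sum F X) g = (\<Sum>x\<in>X. hmul (F x) g)"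
  by (induction X rule: infinite_finite_induct) (auto simp: hmul_add_left)

lemma hmul_sum_right: "hmul f (sum F X) = (\<Sum>x\<in>X. hmul f (F x))"
  by (induction X rule: infinite_finite_induct) (auto simp: hmul_add_right)

lemma hmul_scale_left: "hmul (hscale c f) g = hscale c (hmul f g)"
  unfolding hmul_lin
  by (rule lin_scale[OF addf_outer]) (simp add: M_scale lin_hscale_fun)

lemma hmul_scale_right: "hmul f (hscale c g) = hscale c (hmul f g)"
proof -
  have "\<And>p a. lin (M p a) (hscale c g) = hscale c (lin (M p a) g)"
    by (rule lin_scale[OF addf_M]) (simp add: M_def hscale_single algebra_simps)
  then show ?thesis unfolding hmul_lin by (simp add: lin_hscale_fun)
qed

lemma hmul_single: "hmul (Poly_Mapping.single k1 x) (Poly_Mapping.single k2 y) =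
   Poly_Mapping.single (bkey k1 k2) (x * y * bsign k1 k2)"
proof -
  have a: "addf (\<lambda>p a. Poly_Mapping.single (bkey p k2) (a * y * bsign p k2))"
    by (simp add: addf_def algebra_simps single_add)
  show ?thesis
    by (simp add: hmul_lin lin_single[OF addf_outer] lin_single[OF addf_M] M_def lin_single[OF a])
qed

lemma expand: "(f::uh) = (\<Sum>p\<in>Poly_Mapping.keys f. Poly_Mapping.single p (Poly_Mapping.lookup f p))"
  using lin_id[of f] by (simp add: lin_def)

lemma keys_hmul: "Poly_Mapping.keys (hmul f g) \<subseteq>
   {bkey p q | p q. p \<in> Poly_Mapping.keys f \<and> q \<in> Poly_Mapping.keys g}"
proof -
  have "Poly_Mapping.keys (hmul f g) \<subseteq> (\<Union>p\<in>Poly_Mapping.keys f. Poly_Mapping.keys (\<Sum>q\<in>Poly_Mapping.keys g.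
     Poly_Mapping.single (bkey p q) (Poly_Mapping.lookup f p * Poly_Mapping.lookup g q * bsign p q)))"
    unfolding hmul_def by (rule keys_sum)
  also have "\<dots> \<subseteq> (\<Union>p\<in>Poly_Mapping.keys f. \<Union>q\<in>Poly_Mapping.keys g. Poly_Mapping.keys (
     Poly_Mapping.single (bkey p q) (Poly_Mapping.lookup f p * Poly_Mapping.lookup g q * bsign p q)))"
    by (rule UN_mono[OF order_refl keys_sum])
  also have "\<dots> \<subseteq> {bkey p q | p q. p \<in> Poly_Mapping.keys f \<and> q \<in> Poly_Mapping.keys g}"
    by (auto split: if_splits)
  finally show ?thesis .
qed

definition eps :: "nat \<Rightarrow> nat \<Rightarrow> complex" where
  "eps s t = (if t < s then -1 else 1)"

definition E :: "nat set \<Rightarrow> nat set \<Rightarrow> complex" where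
  "E S T = (\<Prod>s\<in>S. \<Prod>t\<in>T. eps s t)"

lemma bsign_E:
  assumes "finite (snd p)" "finite (snd q)"
  shows "bsign p q = E (snd p) (snd q)"
proof -
  let ?S = "snd p" and ?T = "snd q"
  have set: "{(s, t). s \<in> ?S \<and> t \<in> ?T \<and> t < s} = (SIGMA s:?S. {t\<in>?T. t < s})" by auto
  have "bsign p q = (\<Prod>x\<in>(SIGMA s:?S. {t\<in>?T. t < s}). (-1::complex))"
    unfolding bsign_def set by simp
  also have "\<dots> = (\<Prod>s\<in>?S. \<Prod>t\<in>{t\<in>?T. t < s}. (-1::complex))"
  proof -
    have "(\<Prod>s\<in>?S. \<Prod>t\<in>{t\<in>?T. t < s}. (-1::complex)) = prod (case_prod (\<lambda>s t. -1)) (SIGMA s:?S. {t\<in>?T. t < s})"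
      by (rule prod.Sigma) (use assms in auto)
    moreover have "case_prod (\<lambda>s t. (-1::complex)) = (\<lambda>x. -1)" by auto
    ultimately show ?thesis by simp
  qed
  also have "\<dots> = E ?S ?T"
    unfolding E_def eps_def
    by (rule prod.cong[OF refl], subst prod.inter_filter) (use assms in auto)
  finally show ?thesis .
qed

lemma prod_symdiff:
  fixes h :: "nat \<Rightarrow> complex"
  assumes "finite A" "finite B" "\<And>x. h x * h x = 1"
  shows "prod h ((A - B) \<union> (B - A)) = prod h A * prod h B"
proof -
  have A: "prod h A = prod h (A - B) * prod h (A \<inter> B)"
    using assms by (metis Int_Diff_Un Int_Diff_disjoint finite_Int finite_Diff prod.union_disjoint Un_commute inf_commute mult.commute)
  have B: "prod h B = prod h (B - A) * prod h (A \<inter> B)"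
    using assms by (metis Int_Diff_Un Int_Diff_disjoint finite_Int finite_Diff prod.union_disjoint Un_commute inf_commute mult.commute)
  have sq: "prod h (A \<inter> B) * prod h (A \<inter> B) = 1"
    by (simp add: prod.distrib[symmetric] assms(3))
  have "prod h ((A - B) \<union> (B - A)) = prod h (A - B) * prod h (B - A)"
    by (rule prod.union_disjoint) (use assms in auto)
  also have "\<dots> = prod h (A - B) * prod h (B - A) * (prod h (A \<inter> B) * prod h (A \<inter> B))"
    by (simp add: sq)
  also have "\<dots> = prod h A * prod h B" by (simp add: A B algebra_simps)
  finally show ?thesis .
qed

lemma eps_sq: "eps s t * eps s t = 1"
  by (simp add: eps_def)

lemma E_symdiff_left:
  assumes "finite A" "finite B" "finite C"
  shows "E ((A - B) \<union> (B - A)) C = E A C * E B C"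
  unfolding E_def
  by (rule prod_symdiff) (use assms in \<open>auto simp: prod.distrib[symmetric] eps_sq\<close>)

lemma E_symdiff_right:
  assumes "finite A" "finite B" "finite C"
  shows "E C ((A - B) \<union> (B - A)) = E C A * E C B"
  unfolding E_def
  by (simp add: prod_symdiff assms eps_sq prod.distrib[symmetric])

lemma finite_symdiff: "finite A \<Longrightarrow> finite B \<Longrightarrow> finite ((A - B) \<union> (B - A))" by auto

definition D :: "nat set \<Rightarrow> (nat \<Rightarrow>\<^sub>0 nat)" where
  "D A = (\<Sum>a\<in>A. Poly_Mapping.single a 1)"

lemma lookup_D: "finite A \<Longrightarrow> Poly_Mapping.lookup (D A) x = (if x \<in> A then 1 else 0)"
  unfolding D_def lookup_sum by (simp add: lookup_single when_def)

lemma D_assoc: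
  assumes "finite S" "finite T" "finite R"
  shows "D (S \<inter> T) + D (((S - T) \<union> (T - S)) \<inter> R) = D (T \<inter> R) + D (S \<inter> ((T - R) \<union> (R - T)))"
  by (rule poly_mapping_eqI) (simp add: lookup_add lookup_D assms)

lemma bkey_assoc:
  assumes "finite (snd p)" "finite (snd q)" "finite (snd r)"
  shows "bkey (bkey p q) r = bkey p (bkey q r)"
proof -
  have "D (snd p \<inter> snd q) + D (((snd p - snd q) \<union> (snd q - snd p)) \<inter> snd r)
     = D (snd q \<inter> snd r) + D (snd p \<inter> ((snd q - snd r) \<union> (snd r - snd q)))"
    by (rule D_assoc) (use assms in auto)
  then show ?thesis
    unfolding bkey_def D_def[symmetric] by (auto simp: algebra_simps)
qed

lemma bsign_assoc:
  assumes "finite (snd p)" "finite (snd q)" "finite (snd r)"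
  shows "bsign p q * bsign (bkey p q) r = bsign q r * bsign p (bkey q r)"
  using assms
  by (simp add: bsign_E bkey_def E_symdiff_left E_symdiff_right finite_symdiff)

definition fin :: "uh \<Rightarrow> bool" where
  "fin f \<longleftrightarrow> (\<forall>p\<in>Poly_Mapping.keys f. finite (snd p))"

lemma hmul_single_assoc:
  assumes "finite (snd p)" "finite (snd q)" "finite (snd r)"
  shows "hmul (hmul (Poly_Mapping.single p a) (Poly_Mapping.single q b)) (Poly_Mapping.single r c)
    = hmul (Poly_Mapping.single p a) (hmul (Poly_Mapping.single q b) (Poly_Mapping.single r c))"
proof -
  have eq: "a * b * bsign p q * c * bsign (bkey p q) r = a * (b * c * bsign q r) * bsign p (bkey q r)"
    using bsign_assoc[OF assms] by (simp add: algebra_simps)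
  show ?thesis by (simp only: hmul_single bkey_assoc[OF assms] eq)
qed

lemma hmul_assoc:
  assumes "fin f" "fin g" "fin h"
  shows "hmul (hmul f g) h = hmul f (hmul g h)"
proof -
  define s where "s = (\<lambda>(f::uh) p. Poly_Mapping.single p (Poly_Mapping.lookup f p))"
  have ex: "\<And>f::uh. sum (s f) (Poly_Mapping.keys f) = f" unfolding s_def by (rule expand[symmetric])
  have hx: "\<And>x. hmul x h = (\<Sum>r\<in>Poly_Mapping.keys h. hmul x (s h r))"
    by (simp only: hmul_sum_right[symmetric] ex)
  have xf: "\<And>x. hmul f x = (\<Sum>p\<in>Poly_Mapping.keys f. hmul (s f p) x)"
    by (simp only: hmul_sum_left[symmetric] ex)
  have fg: "hmul f g = (\<Sum>p\<in>Poly_Mapping.keys f. \<Sum>q\<in>Poly_Mapping.keys g. hmul (s f p) (s g q))"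
    by (simp only: hmul_sum_left[symmetric] hmul_sum_right[symmetric] ex)
  have gh: "hmul g h = (\<Sum>q\<in>Poly_Mapping.keys g. \<Sum>r\<in>Poly_Mapping.keys h. hmul (s g q) (s h r))"
    by (simp only: hmul_sum_left[symmetric] hmul_sum_right[symmetric] ex)
  have "hmul (hmul f g) h = (\<Sum>p\<in>Poly_Mapping.keys f. \<Sum>q\<in>Poly_Mapping.keys g. \<Sum>r\<in>Poly_Mapping.keys h.
      hmul (hmul (s f p) (s g q)) (s h r))"
    by (simp only: fg hmul_sum_left, simp only: hx)
  also have "\<dots> = (\<Sum>p\<in>Poly_Mapping.keys f. \<Sum>q\<in>Poly_Mapping.keys g. \<Sum>r\<in>Poly_Mapping.keys h.
      hmul (s f p) (hmul (s g q) (s h r)))"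
    using assms unfolding fin_def s_def by (intro sum.cong refl hmul_single_assoc) auto
  also have "\<dots> = (\<Sum>q\<in>Poly_Mapping.keys g. \<Sum>r\<in>Poly_Mapping.keys h. \<Sum>p\<in>Poly_Mapping.keys f.
      hmul (s f p) (hmul (s g q) (s h r)))"
    by (rule trans[OF sum.swap sum.cong[OF refl sum.swap]])
  also have "\<dots> = hmul f (hmul g h)"
    by (simp only: gh hmul_sum_right, simp only: xf)
  finally show ?thesis .
qed

lemma bkey_hone: "bkey (0, {}) q = q"
  by (simp add: bkey_def)

lemma bsign_hone: "bsign (0, {}) q = 1"
  by (simp add: bsign_def)

lemma bkey_hone_r: "bkey q (0, {}) = q"
  by (simp add: bkey_def)

lemma bsign_hone_r: "bsign q (0, {}) = 1"
  by (simp add: bsign_def)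

lemma hmul_hone_left[simp]: "hmul hone f = f"
proof -
  have "hmul hone f = hmul hone (\<Sum>p\<in>Poly_Mapping.keys f. Poly_Mapping.single p (Poly_Mapping.lookup f p))"
    by (simp only: expand[symmetric])
  also have "\<dots> = (\<Sum>p\<in>Poly_Mapping.keys f. Poly_Mapping.single p (Poly_Mapping.lookup f p))"
    by (simp add: hmul_sum_right hone_def hmul_single bkey_hone bsign_hone)
  finally show ?thesis by (simp only: expand[symmetric])
qed

lemma hmul_hone_right[simp]: "hmul f hone = f"
proof -
  have "hmul f hone = hmul (\<Sum>p\<in>Poly_Mapping.keys f. Poly_Mapping.single p (Poly_Mapping.lookup f p)) hone"
    by (simp only: expand[symmetric])
  also have "\<dots> = (\<Sum>p\<in>Poly_Mapping.keys f. Poly_Mapping.single p (Poly_Mapping.lookup f p))"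
    by (simp add: hmul_sum_left hone_def hmul_single bkey_hone_r bsign_hone_r)
  finally show ?thesis by (simp only: expand[symmetric])
qed

lemma xsq_eq: "xsq a = Poly_Mapping.single (Poly_Mapping.single a 1, {}) 1"
proof -
  have "{(s, t). s \<in> snd (0::nat\<Rightarrow>\<^sub>0nat, {a}) \<and> t \<in> snd (0::nat\<Rightarrow>\<^sub>0nat, {a}) \<and> t < s} = {}" by auto
  then have "bsign (0, {a}) (0, {a}) = 1" unfolding bsign_def by (simp only:) simp
  then show ?thesis by (simp add: xsq_def xi_def hmul_single bkey_def)
qed

definition shf :: "nat \<Rightarrow> (nat \<Rightarrow>\<^sub>0 nat) \<Rightarrow> (nat \<Rightarrow>\<^sub>0 nat)" where
  "shf i m = (\<Sum>a\<in>Poly_Mapping.keys m. Poly_Mapping.single (i + a) (Poly_Mapping.lookup m a))"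

lemma lookup_shf: "Poly_Mapping.lookup (shf i m) x = (if i \<le> x then Poly_Mapping.lookup m (x - i) else 0)"
proof -
  have "Poly_Mapping.lookup (shf i m) x = (\<Sum>a\<in>Poly_Mapping.keys m. if a = x - i \<and> i \<le> x then Poly_Mapping.lookup m a else 0)"
    unfolding shf_def lookup_sum by (intro sum.cong refl) (auto simp: lookup_single when_def)
  also have "\<dots> = (if i \<le> x then Poly_Mapping.lookup m (x - i) else 0)"
    by (cases "i \<le> x") (auto simp: in_keys_iff)
  finally show ?thesis .
qed

lemma shkey_eq: "shkey i p = (shf i (fst p), (\<lambda>a. i + a) ` snd p)"
  by (simp add: shkey_def shf_def)

lemma shkey_inj: "shkey i p = shkey i q \<Longrightarrow> p = q"
proof -
  assume h: "shkey i p = shkey i q"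
  then have 1: "shf i (fst p) = shf i (fst q)" and 2: "(\<lambda>a. i + a) ` snd p = (\<lambda>a. i + a) ` snd q"
    by (simp_all add: shkey_eq)
  have "fst p = fst q"
  proof (rule poly_mapping_eqI)
    fix x show "Poly_Mapping.lookup (fst p) x = Poly_Mapping.lookup (fst q) x"
      using arg_cong[OF 1, of "\<lambda>m. Poly_Mapping.lookup m (i + x)"] by (simp add: lookup_shf)
  qed
  moreover have "snd p = snd q" using 2 by (simp add: inj_image_eq_iff inj_def)
  ultimately show "p = q" by (simp add: prod_eq_iff)
qed

lemma lookup_D_image:
  assumes "finite A"
  shows "D ((\<lambda>a. i + a) ` A) = shf i (D A)"
  apply (rule poly_mapping_eqI)
  apply (auto simp: lookup_D assms lookup_shf)
  by (metis le_add_diff_inverse rev_image_eqI)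

lemma shf_add: "shf i (m1 + m2) = shf i m1 + shf i m2"
  by (rule poly_mapping_eqI) (simp add: lookup_shf lookup_add)

lemma shkey_bkey:
  assumes "finite (snd p)" "finite (snd q)"
  shows "shkey i (bkey p q) = bkey (shkey i p) (shkey i q)"
proof -
  have inj: "inj ((+) i)" by (simp add: inj_def)
  have "(\<lambda>a. i + a) ` (snd p \<inter> snd q) = (\<lambda>a. i + a) ` snd p \<inter> (\<lambda>a. i + a) ` snd q"
    using inj by (simp add: image_Int)
  moreover have "(\<lambda>a. i + a) ` ((snd p - snd q) \<union> (snd q - snd p)) =
     ((\<lambda>a. i + a) ` snd p - (\<lambda>a. i + a) ` snd q) \<union> ((\<lambda>a. i + a) ` snd q - (\<lambda>a. i + a) ` snd p)"
    using inj by (simp add: image_Un image_set_diff)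
  moreover have "shf i (D (snd p \<inter> snd q)) = D ((\<lambda>a. i + a) ` (snd p \<inter> snd q))"
    using assms by (simp add: lookup_D_image)
  ultimately show ?thesis
    unfolding bkey_def shkey_eq D_def[symmetric] by (simp add: shf_add)
qed

lemma E_image:
  assumes "finite S" "finite T"
  shows "E ((\<lambda>a. i + a) ` S) ((\<lambda>a. i + a) ` T) = E S T"
proof -
  have inj: "inj_on ((+) i) X" for X :: "nat set" by (simp add: inj_on_def)
  show ?thesis
    unfolding E_def using inj by (simp add: prod.reindex eps_def)
qed

lemma bsign_shkey:
  assumes "finite (snd p)" "finite (snd q)"
  shows "bsign (shkey i p) (shkey i q) = bsign p q"
  using assms by (simp add: bsign_E shkey_eq E_image)

lemma addf_sh: "addf (\<lambda>p c. Poly_Mapping.single (shkey i p) c)"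
  by (simp add: addf_def single_add)

lemma sh_lin: "sh i f = lin (\<lambda>p c. Poly_Mapping.single (shkey i p) c) f"
  by (simp add: sh_def lin_def)

lemma sh_add: "sh i (f + g) = sh i f + sh i g"
  by (simp add: sh_lin lin_add[OF addf_sh])

lemma sh_zero[simp]: "sh i 0 = 0"
  by (simp add: sh_def)

lemma sh_sum: "sh i (sum F X) = (\<Sum>x\<in>X. sh i (F x))"
  by (simp add: sh_lin lin_sum[OF addf_sh])

lemma sh_single: "sh i (Poly_Mapping.single p c) = Poly_Mapping.single (shkey i p) c"
  by (simp add: sh_lin lin_single[OF addf_sh])

lemma sh_scale: "sh i (hscale c f) = hscale c (sh i f)"
  by (simp add: sh_lin lin_scale[OF addf_sh] hscale_single)

lemma keys_sh: "Poly_Mapping.keys (sh i f) \<subseteq> shkey i ` Poly_Mapping.keys f"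
proof -
  have "Poly_Mapping.keys (sh i f) \<subseteq> (\<Union>p\<in>Poly_Mapping.keys f. Poly_Mapping.keys (Poly_Mapping.single (shkey i p) (Poly_Mapping.lookup f p)))"
    unfolding sh_def by (rule keys_sum)
  also have "\<dots> \<subseteq> shkey i ` Poly_Mapping.keys f" by auto
  finally show ?thesis .
qed

lemma sh_hmul:
  assumes "fin f" "fin g"
  shows "sh i (hmul f g) = hmul (sh i f) (sh i g)"
proof -
  define s where "s = (\<lambda>(f::uh) p. Poly_Mapping.single p (Poly_Mapping.lookup f p))"
  have ex: "\<And>f::uh. sum (s f) (Poly_Mapping.keys f) = f" unfolding s_def by (rule expand[symmetric])
  have fg: "hmul f g = (\<Sum>p\<in>Poly_Mapping.keys f. \<Sum>q\<in>Poly_Mapping.keys g. hmul (s f p) (s g q))"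
    by (simp only: hmul_sum_left[symmetric] hmul_sum_right[symmetric] ex)
  have sf: "sh i f = (\<Sum>p\<in>Poly_Mapping.keys f. sh i (s f p))"
    by (simp only: sh_sum[symmetric] ex)
  have sg: "sh i g = (\<Sum>p\<in>Poly_Mapping.keys g. sh i (s g p))"
    by (simp only: sh_sum[symmetric] ex)
  have "sh i (hmul f g) = (\<Sum>p\<in>Poly_Mapping.keys f. \<Sum>q\<in>Poly_Mapping.keys g. sh i (hmul (s f p) (s g q)))"
    by (simp only: fg sh_sum)
  also have "\<dots> = (\<Sum>p\<in>Poly_Mapping.keys f. \<Sum>q\<in>Poly_Mapping.keys g. hmul (sh i (s f p)) (sh i (s g q)))"
    using assms unfolding fin_def s_def
    by (intro sum.cong refl) (simp add: hmul_single sh_single shkey_bkey bsign_shkey)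
  also have "\<dots> = hmul (sh i f) (sh i g)"
    by (simp only: sf hmul_sum_left, simp only: sg hmul_sum_right)
  finally show ?thesis .
qed

lemma sh_hone[simp]: "sh i hone = hone"
  by (simp add: hone_def sh_single shkey_def)

lemma sh_xi: "sh i (xi a) = xi (i + a)"
  by (simp add: xi_def sh_single shkey_def)

lemma sh_xsq: "sh i (xsq a) = xsq (i + a)"
  by (simp add: xsq_eq sh_single shkey_def)

lemma lookup_hpart: "Poly_Mapping.lookup (hpart e f) p = (if card (snd p) mod 2 = e then Poly_Mapping.lookup f p else 0)"
proof -
  have "Poly_Mapping.lookup (hpart e f) p = (\<Sum>q\<in>{q \<in> Poly_Mapping.keys f. card (snd q) mod 2 = e}. (Poly_Mapping.lookup f q when q = p))"
    unfolding hpart_def lookup_sum by (simp add: lookup_single)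
  also have "\<dots> = (if card (snd p) mod 2 = e then Poly_Mapping.lookup f p else 0)"
    by (auto simp: when_def in_keys_iff)
  finally show ?thesis .
qed

lemma hpart_add: "hpart e (f + g) = hpart e f + hpart e g"
  by (rule poly_mapping_eqI) (simp add: lookup_hpart lookup_add)

lemma hpart_zero[simp]: "hpart e 0 = 0"
  by (rule poly_mapping_eqI) (simp add: lookup_hpart)

lemma hpart_sum: "hpart e (sum F X) = (\<Sum>x\<in>X. hpart e (F x))"
  by (induction X rule: infinite_finite_induct) (auto simp: hpart_add)

lemma hpart_scale: "hpart e (hscale c f) = hscale c (hpart e f)"
  by (rule poly_mapping_eqI) (simp add: lookup_hpart)

lemma hpart_split: "f = hpart 0 f + hpart 1 f"
  by (rule poly_mapping_eqI) (simp add: lookup_hpart lookup_add)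

lemma keys_hpart: "Poly_Mapping.keys (hpart e f) \<subseteq> Poly_Mapping.keys f"
  by (auto simp: in_keys_iff lookup_hpart split: if_splits)

definition hom :: "nat \<Rightarrow> uh \<Rightarrow> bool" where
  "hom e f \<longleftrightarrow> (\<forall>p\<in>Poly_Mapping.keys f. card (snd p) mod 2 = e)"

lemma hom_hpart: "hom e (hpart e f)"
  by (auto simp: hom_def in_keys_iff lookup_hpart split: if_splits)

lemma hpart_hom: "hom e f \<Longrightarrow> hpart e' f = (if e' = e then f else 0)"
  by (rule poly_mapping_eqI) (auto simp: hom_def lookup_hpart in_keys_iff)

lemma hom_add: "hom e f \<Longrightarrow> hom e g \<Longrightarrow> hom e (f + g)"
  using keys_add[of f g] by (auto simp: hom_def)

lemma hom_scale: "hom e f \<Longrightarrow> hom e (hscale c f)"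
  using keys_hscale[of c f] by (auto simp: hom_def)

lemma hom_zero: "hom e 0"
  by (simp add: hom_def)

lemma card_symdiff:
  assumes "finite S" "finite T"
  shows "card S + card T = card ((S - T) \<union> (T - S)) + 2 * card (S \<inter> T)"
proof -
  have "card S = card (S - T) + card (S \<inter> T)"
    using assms by (metis Int_Diff_Un Int_Diff_disjoint add.commute card_Un_disjoint finite_Diff finite_Int)
  moreover have "card T = card (T - S) + card (S \<inter> T)"
    using assms by (metis Int_Diff_Un Int_Diff_disjoint add.commute card_Un_disjoint finite_Diff finite_Int inf_commute)
  moreover have "card ((S - T) \<union> (T - S)) = card (S - T) + card (T - S)"
    by (rule card_Un_disjoint) (use assms in auto)
  ultimately show ?thesis by simp
qed

lemma hom_hmul:
  assumes "fin f" "fin g" "hom e f" "hom e' g"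
  shows "hom ((e + e') mod 2) (hmul f g)"
  unfolding hom_def
proof
  fix x assume "x \<in> Poly_Mapping.keys (hmul f g)"
  then obtain p q where x: "x = bkey p q" and p: "p \<in> Poly_Mapping.keys f" and q: "q \<in> Poly_Mapping.keys g"
    using keys_hmul by blast
  have fp: "finite (snd p)" "finite (snd q)" using assms p q by (auto simp: fin_def)
  have "card (snd p) mod 2 = e" "card (snd q) mod 2 = e'" using assms p q by (auto simp: hom_def)
  with card_symdiff[OF fp] show "card (snd x) mod 2 = (e + e') mod 2"
    unfolding x bkey_def snd_conv by (metis mod_add_eq mod_mult_self2 mult.commute)
qed

lemma fin_hmul: "fin f \<Longrightarrow> fin g \<Longrightarrow> fin (hmul f g)"
  using keys_hmul[of f g] unfolding fin_def bkey_def by fastforce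

lemma fin_add: "fin f \<Longrightarrow> fin g \<Longrightarrow> fin (f + g)"
  using keys_add[of f g] by (auto simp: fin_def)

lemma fin_scale: "fin f \<Longrightarrow> fin (hscale c f)"
  using keys_hscale[of c f] by (auto simp: fin_def)

lemma fin_zero: "fin 0"
  by (simp add: fin_def)

lemma fin_sum: "(\<And>x. x \<in> X \<Longrightarrow> fin (F x)) \<Longrightarrow> fin (sum F X)"
  by (induction X rule: infinite_finite_induct) (auto simp: fin_zero fin_add)

lemma fin_hpart: "fin f \<Longrightarrow> fin (hpart e f)"
  using keys_hpart[of e f] by (auto simp: fin_def)

lemma fin_sh: "fin f \<Longrightarrow> fin (sh i f)"
  unfolding fin_def
proof
  fix x assume f: "\<forall>p\<in>Poly_Mapping.keys f. finite (snd p)" and x: "x \<in> Poly_Mapping.keys (sh i f)"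
  then obtain p where "p \<in> Poly_Mapping.keys f" "x = shkey i p" using keys_sh by blast
  then show "finite (snd x)" using f by (simp add: shkey_eq)
qed

lemma fin_hone: "fin hone" by (simp add: fin_def hone_def)
lemma fin_xi: "fin (xi a)" by (simp add: fin_def xi_def)
lemma fin_xsq: "fin (xsq a)" by (simp add: fin_def xsq_eq)

lemma hom_hone: "hom 0 hone" by (simp add: hom_def hone_def)
lemma hom_xi: "hom 1 (xi a)" by (simp add: hom_def xi_def)
lemma hom_xsq: "hom 0 (xsq a)" by (simp add: hom_def xsq_eq)

lemma hom_sh: "hom e f \<Longrightarrow> hom e (sh i f)"
  unfolding hom_def
proof
  fix x assume f: "\<forall>p\<in>Poly_Mapping.keys f. card (snd p) mod 2 = e" and x: "x \<in> Poly_Mapping.keys (sh i f)"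
  then obtain p where "p \<in> Poly_Mapping.keys f" "x = shkey i p" using keys_sh by blast
  then show "card (snd x) mod 2 = e" using f by (simp add: shkey_eq card_image inj_on_def)
qed

lemma bkey_comm: "bkey p q = bkey q p"
  by (auto simp: bkey_def algebra_simps Int_commute Un_commute)

lemma E_swap:
  assumes "finite S" "finite T" "S \<inter> T = {}"
  shows "E T S * E S T = (-1) ^ (card S * card T)"
proof -
  have "E T S * E S T = (\<Prod>s\<in>S. \<Prod>t\<in>T. eps t s) * E S T"
    unfolding E_def by (simp add: prod.swap[of _ T])
  also have "\<dots> = (\<Prod>s\<in>S. \<Prod>t\<in>T. eps t s * eps s t)"
    unfolding E_def by (simp add: prod.distrib)
  also have "\<dots> = (\<Prod>s\<in>S. \<Prod>t\<in>T. -1)"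
    using assms by (intro prod.cong refl) (auto simp: eps_def)
  also have "\<dots> = (-1) ^ (card S * card T)"
    by (simp add: power_mult[symmetric] mult.commute)
  finally show ?thesis .
qed

lemma bsign_sq: "bsign p q * bsign p q = 1"
  by (simp add: bsign_def power_mult_distrib[symmetric])

lemma bsign_comm:
  assumes "finite (snd p)" "finite (snd q)" "snd p \<inter> snd q = {}"
  shows "bsign q p = (-1) ^ ((card (snd p) mod 2) * (card (snd q) mod 2)) * bsign p q"
proof -
  have "bsign q p * bsign p q = (-1) ^ (card (snd p) * card (snd q))"
    using assms by (simp add: bsign_E E_swap)
  then have "bsign q p = (-1) ^ (card (snd p) * card (snd q)) * bsign p q"
    by (metis bsign_sq mult.assoc mult.right_neutral)
  moreover have "((-1)::complex) ^ (card (snd p) * card (snd q)) = (-1) ^ ((card (snd p) mod 2) * (card (snd q) mod 2))"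
    by (simp add: minus_one_power_iff even_mult_iff)
  ultimately show ?thesis by simp
qed

lemma hmul_comm:
  assumes "fin f" "fin g" "hom e f" "hom e' g"
    and disj: "\<And>p q. p \<in> Poly_Mapping.keys f \<Longrightarrow> q \<in> Poly_Mapping.keys g \<Longrightarrow> snd p \<inter> snd q = {}"
  shows "hmul g f = hscale ((-1) ^ (e * e')) (hmul f g)"
proof -
  have "hmul g f = (\<Sum>q\<in>Poly_Mapping.keys g. \<Sum>p\<in>Poly_Mapping.keys f.
      Poly_Mapping.single (bkey q p) (Poly_Mapping.lookup g q * Poly_Mapping.lookup f p * bsign q p))"
    by (simp add: hmul_def)
  also have "\<dots> = (\<Sum>q\<in>Poly_Mapping.keys g. \<Sum>p\<in>Poly_Mapping.keys f.
      hscale ((-1) ^ (e * e')) (Poly_Mapping.single (bkey p q) (Poly_Mapping.lookup f p * Poly_Mapping.lookup g q * bsign p q)))"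
  proof (intro sum.cong refl)
    fix q p assume q: "q \<in> Poly_Mapping.keys g" and p: "p \<in> Poly_Mapping.keys f"
    have fp: "finite (snd p)" "finite (snd q)" using assms p q by (auto simp: fin_def)
    have "card (snd p) mod 2 = e" "card (snd q) mod 2 = e'" using assms p q by (auto simp: hom_def)
    then show "Poly_Mapping.single (bkey q p) (Poly_Mapping.lookup g q * Poly_Mapping.lookup f p * bsign q p) =
      hscale ((-1) ^ (e * e')) (Poly_Mapping.single (bkey p q) (Poly_Mapping.lookup f p * Poly_Mapping.lookup g q * bsign p q))"
      using bsign_comm[OF fp disj[OF p q]] by (simp add: hscale_single bkey_comm[of q p] algebra_simps)
  qed
  also have "\<dots> = hscale ((-1) ^ (e * e')) (hmul f g)"
    by (simp add: hmul_def hscale_sum sum.swap[of _ "Poly_Mapping.keys g"])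
  finally show ?thesis .
qed

definition supp :: "nat \<Rightarrow> uh \<Rightarrow> bool" where
  "supp m f \<longleftrightarrow> (\<forall>p\<in>Poly_Mapping.keys f. snd p \<subseteq> {1..m})"

lemma supp_fin: "supp m f \<Longrightarrow> fin f"
  by (auto simp: supp_def fin_def intro: finite_subset)

lemma supp_hmul: "supp m f \<Longrightarrow> supp m g \<Longrightarrow> supp m (hmul f g)"
  using keys_hmul[of f g] unfolding supp_def bkey_def by fastforce

lemma supp_add: "supp m f \<Longrightarrow> supp m g \<Longrightarrow> supp m (f + g)"
  using keys_add[of f g] by (auto simp: supp_def)

lemma supp_scale: "supp m f \<Longrightarrow> supp m (hscale c f)"
  using keys_hscale[of c f] by (auto simp: supp_def)

lemma supp_zero: "supp m 0"
  by (simp add: supp_def)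

lemma supp_sum: "(\<And>x. x \<in> X \<Longrightarrow> supp m (F x)) \<Longrightarrow> supp m (sum F X)"
  by (induction X rule: infinite_finite_induct) (auto simp: supp_zero supp_add)

lemma supp_hpart: "supp m f \<Longrightarrow> supp m (hpart e f)"
  using keys_hpart[of e f] by (auto simp: supp_def)

lemma supp_hone: "supp m hone" by (simp add: supp_def hone_def)
lemma supp_xi: "a \<in> {1..m} \<Longrightarrow> supp m (xi a)" by (simp add: supp_def xi_def)
lemma supp_xsq: "supp m (xsq a)" by (simp add: supp_def xsq_eq)

lemma supp_hprod: "(\<And>x. x \<in> set xs \<Longrightarrow> supp m x) \<Longrightarrow> supp m (hprod xs)"
  by (induction xs) (auto simp: supp_hone supp_hmul)

lemma supp_ufac:
  assumes "I \<subseteq> {1..m}" "finite I" "card I = k"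
  shows "supp m (ufac k I)"
proof -
  have "\<And>l. l \<in> {1..<k+1} \<Longrightarrow> supp m (xsq (sorted_list_of_set I ! (l - 1)) +
      hscale ((-1) ^ (k - l)) (xi (sorted_list_of_set I ! (l - 1))))"
  proof -
    fix l assume l: "l \<in> {1..<k+1}"
    then have "l - 1 < length (sorted_list_of_set I)" using assms by auto
    then have "sorted_list_of_set I ! (l - 1) \<in> I"
      using assms(2) by (metis nth_mem set_sorted_list_of_set)
    then show "supp m (xsq (sorted_list_of_set I ! (l - 1)) +
      hscale ((-1) ^ (k - l)) (xi (sorted_list_of_set I ! (l - 1))))" using assms(1)
      by (intro supp_add supp_xsq supp_scale supp_xi) auto
  qed
  then show ?thesis unfolding ufac_def Let_def
    by (intro supp_hprod) auto
qed

lemma ufull_supp: "supp m (ufull m k)"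
  unfolding ufull_def
proof (rule supp_sum)
  fix I assume "I \<in> {I. I \<subseteq> {1..m} \<and> card I = k}"
  then show "supp m (ufac k I)" by (intro supp_ufac) (auto intro: finite_subset)
qed

lemma W_supp: "f \<in> W m \<Longrightarrow> supp m f"
  by (induction rule: W.induct)
     (auto simp: u_def intro: supp_hpart ufull_supp supp_hone supp_add supp_scale supp_hmul)

lemma W_fin: "f \<in> W m \<Longrightarrow> fin f"
  using W_supp supp_fin by blast

lemma W_zero: "0 \<in> W m"
proof -
  have "hscale 0 hone \<in> W m" by (rule W.scale[OF W.one])
  then show ?thesis by simp
qed

lemma W_hom_hpart: "hom e' x \<Longrightarrow> x \<in> W m \<Longrightarrow> hpart e x \<in> W m"
  by (simp add: hpart_hom W_zero)

lemma hpart_big: assumes "e \<ge> 2" shows "hpart e f = 0"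
proof (rule poly_mapping_eqI)
  fix k :: hmono
  have "card (snd k) mod 2 < 2" by simp
  then have ne: "card (snd k) mod 2 \<noteq> e" using assms by linarith
  show "Poly_Mapping.lookup (hpart e f) k = Poly_Mapping.lookup 0 k"
    by (simp add: lookup_hpart ne)
qed

lemma W_hpart: "f \<in> W m \<Longrightarrow> hpart e f \<in> W m"
proof (induction arbitrary: e rule: W.induct)
  case (gen k e')
  show ?case unfolding u_def
    by (rule W_hom_hpart[OF hom_hpart]) (use gen W.gen u_def in auto)
next
  case one
  show ?case by (rule W_hom_hpart[OF hom_hone W.one])
next
  case (add f g)
  then show ?case by (simp add: hpart_add W.add)
next
  case (scale f c)
  then show ?case by (simp add: hpart_scale W.scale)
next
  case (mul f g)
  have ff: "fin (hpart e1 f)" "fin (hpart e1 g)" for e1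
    using mul W_fin fin_hpart by auto
  have t: "hpart e (hmul (hpart e1 f) (hpart e2 g)) \<in> W m" for e1 e2
    by (rule W_hom_hpart[OF hom_hmul[OF ff(1) ff(2) hom_hpart hom_hpart]])
       (use mul in \<open>auto intro: W.mul\<close>)
  have "hmul f g = hmul (hpart 0 f + hpart 1 f) (hpart 0 g + hpart 1 g)"
    using hpart_split by metis
  then have "hpart e (hmul f g) = hpart e (hmul (hpart 0 f) (hpart 0 g)) + hpart e (hmul (hpart 0 f) (hpart 1 g))
     + (hpart e (hmul (hpart 1 f) (hpart 0 g)) + hpart e (hmul (hpart 1 f) (hpart 1 g)))"
    by (simp add: hmul_add_left hmul_add_right hpart_add)
  then show ?case using t by (simp add: W.add)
qed

lemma ufull_zero: "ufull m 0 = hone"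
proof -
  have "{I. I \<subseteq> {1..m} \<and> card I = 0} = {{}}"
    using finite_subset[of _ "{1..m}"] by fastforce
  then show ?thesis by (simp add: ufull_def ufac_def)
qed

lemma ufull_big: "k > m \<Longrightarrow> ufull m k = 0"
proof -
  assume k: "k > m"
  have "{I. I \<subseteq> {1..m} \<and> card I = k} = {}"
  proof (rule ccontr)
    assume "{I. I \<subseteq> {1..m} \<and> card I = k} \<noteq> {}"
    then obtain I where "I \<subseteq> {1..m}" "card I = k" by auto
    then have "k \<le> m" by (metis card_atLeastAtMost card_mono diff_Suc_1 finite_atLeastAtMost)
    with k show False by simp
  qed
  then show ?thesis unfolding ufull_def by (simp only: sum.empty)
qed

lemma W_u: "u m a e \<in> W m"
proof (cases "e \<ge> 2")
  case True then show ?thesis by (simp add: u_def hpart_big W_zero)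
next
  case False
  then have e: "e \<in> {0, 1}" by auto
  show ?thesis
  proof (cases "a = 0")
    case True then show ?thesis
      by (simp add: u_def ufull_zero W_hom_hpart[OF hom_hone W.one])
  next
    case False
    show ?thesis
    proof (cases "a > m")
      case True then show ?thesis by (simp add: u_def ufull_big W_zero)
    next
      case False
      with \<open>a \<noteq> 0\<close> e show ?thesis by (intro W.gen) auto
    qed
  qed
qed

lemma hspan_sum: "(\<And>x. x \<in> X \<Longrightarrow> F x \<in> hspan S) \<Longrightarrow> sum F X \<in> hspan S"
  by (induction X rule: infinite_finite_induct) (auto intro: hspan.intros)

lemma T_gen: "a \<in> W i \<Longrightarrow> b \<in> W j \<Longrightarrow> hmul a (sh i b) \<in> Wtensor i j"
  unfolding Wtensor_def by (rule hspan.base) blast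

lemma sh_supp_disj:
  assumes "supp i a" "supp j b" "p \<in> Poly_Mapping.keys a" "q \<in> Poly_Mapping.keys (sh i b)"
  shows "snd p \<inter> snd q = {}"
proof -
  obtain q' where q': "q' \<in> Poly_Mapping.keys b" "q = shkey i q'" using keys_sh assms(4) by blast
  have "snd p \<subseteq> {1..i}" using assms(1,3) by (auto simp: supp_def)
  moreover have "snd q' \<subseteq> {1..j}" using assms(2) q' by (auto simp: supp_def)
  then have "snd q \<subseteq> {i+1..}" using q' by (auto simp: shkey_eq)
  ultimately show ?thesis by fastforce
qed

lemma key_prod:
  assumes a: "a \<in> W i" and a': "a' \<in> W i" and b: "b \<in> W j" and b': "b' \<in> W j"
    and h1: "hom e1 b" and h2: "hom e2 a'"
  shows "hmul (hmul a (sh i b)) (hmul a' (sh i b')) =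
    hscale ((-1) ^ (e2 * e1)) (hmul (hmul a a') (sh i (hmul b b')))"
proof -
  have f: "fin a" "fin a'" "fin b" "fin b'" "fin (sh i b)" "fin (sh i b')"
    using assms W_fin fin_sh by auto
  have comm: "hmul (sh i b) a' = hscale ((-1) ^ (e2 * e1)) (hmul a' (sh i b))"
    by (rule hmul_comm[OF f(2) f(5) h2 hom_sh[OF h1]])
       (rule sh_supp_disj[OF W_supp[OF a'] W_supp[OF b]])
  have "hmul (hmul a (sh i b)) (hmul a' (sh i b')) = hmul a (hmul (hmul (sh i b) a') (sh i b'))"
    using f by (simp add: hmul_assoc fin_hmul)
  also have "\<dots> = hscale ((-1) ^ (e2 * e1)) (hmul a (hmul (hmul a' (sh i b)) (sh i b')))"
    by (simp add: comm hmul_scale_left hmul_scale_right)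
  also have "\<dots> = hscale ((-1) ^ (e2 * e1)) (hmul (hmul a a') (sh i (hmul b b')))"
    using f by (simp add: hmul_assoc fin_hmul sh_hmul)
  finally show ?thesis .
qed

lemma T_gen_mul:
  assumes a: "a \<in> W i" and a': "a' \<in> W i" and b: "b \<in> W j" and b': "b' \<in> W j"
  shows "hmul (hmul a (sh i b)) (hmul a' (sh i b')) \<in> Wtensor i j"
proof -
  have t: "hmul (hmul a (sh i (hpart e1 b))) (hmul (hpart e2 a') (sh i b')) \<in> Wtensor i j" for e1 e2
  proof -
    have "hmul (hmul a (sh i (hpart e1 b))) (hmul (hpart e2 a') (sh i b')) =
       hscale ((-1) ^ (e2 * e1)) (hmul (hmul a (hpart e2 a')) (sh i (hmul (hpart e1 b) b')))"
      by (rule key_prod) (use assms W_hpart hom_hpart in auto)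
    also have "\<dots> \<in> Wtensor i j"
      unfolding Wtensor_def
      by (intro hspan.scale hspan.base) (use assms W_hpart in \<open>blast intro: W.mul\<close>)
    finally show ?thesis .
  qed
  have "hmul (hmul a (sh i b)) (hmul a' (sh i b')) =
     hmul (hmul a (sh i (hpart 0 b + hpart 1 b))) (hmul (hpart 0 a' + hpart 1 a') (sh i b'))"
    using hpart_split by metis
  also have "\<dots> = (hmul (hmul a (sh i (hpart 0 b))) (hmul (hpart 0 a') (sh i b')) +
      hmul (hmul a (sh i (hpart 0 b))) (hmul (hpart 1 a') (sh i b'))) +
     (hmul (hmul a (sh i (hpart 1 b))) (hmul (hpart 0 a') (sh i b')) +
      hmul (hmul a (sh i (hpart 1 b))) (hmul (hpart 1 a') (sh i b')))"
    by (simp add: sh_add hmul_add_left hmul_add_right)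
  also have "\<dots> \<in> Wtensor i j"
    unfolding Wtensor_def using t unfolding Wtensor_def by (intro hspan.add) auto
  finally show ?thesis .
qed

lemma T_mul_base:
  assumes "x \<in> {hmul a (sh i b) | a b. a \<in> W i \<and> b \<in> W j}" "y \<in> Wtensor i j"
  shows "hmul x y \<in> Wtensor i j"
  using assms(2) unfolding Wtensor_def
proof (induction rule: hspan.induct)
  case zero then show ?case by (simp add: hspan.zero)
next
  case (base f)
  then show ?case using assms(1) T_gen_mul unfolding Wtensor_def by blast
next
  case (add f g)
  then show ?case by (simp add: hmul_add_right hspan.add)
next
  case (scale f c)
  then show ?case by (simp add: hmul_scale_right hspan.scale)
qed

lemma T_mul:
  assumes "x \<in> Wtensor i j" "y \<in> Wtensor i j"
  shows "hmul x y \<in> Wtensor i j"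
  using assms(1) unfolding Wtensor_def
proof (induction rule: hspan.induct)
  case zero then show ?case by (simp add: hspan.zero)
next
  case (base f)
  then show ?case using T_mul_base assms(2) unfolding Wtensor_def by blast
next
  case (add f g)
  then show ?case by (simp add: hmul_add_left hspan.add)
next
  case (scale f c)
  then show ?case by (simp add: hmul_scale_left hspan.scale)
qed

lemma T_one: "hone \<in> Wtensor i j"
  using T_gen[OF W.one W.one, of i j] by simp

definition fac :: "nat \<Rightarrow> nat \<Rightarrow> uh" where
  "fac e x = xsq x + hscale ((-1) ^ e) (xi x)"

fun pf :: "nat \<Rightarrow> nat list \<Rightarrow> uh" where
  "pf b [] = hone"
| "pf b (x # xs) = hmul (fac (b + length xs) x) (pf b xs)"

lemma fin_fac: "fin (fac e x)"
  by (simp add: fac_def fin_add fin_scale fin_xsq fin_xi)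

lemma fin_pf: "fin (pf b xs)"
  by (induction xs) (auto simp: fin_hone fin_hmul fin_fac)

lemma ufac_pf_aux:
  "length s = k \<Longrightarrow>
   hprod (map (\<lambda>l. xsq (s ! (l - 1)) + hscale ((-1) ^ (k - l)) (xi (s ! (l - 1)))) [1..<k+1]) = pf 0 s"
proof (induction s arbitrary: k)
  case Nil then show ?case by simp
next
  case (Cons x xs)
  then obtain m where k: "k = Suc m" and m: "length xs = m" by auto
  define F where "F = (\<lambda>l. xsq ((x # xs) ! (l - 1)) + hscale ((-1) ^ (k - l)) (xi ((x # xs) ! (l - 1))))"
  define G where "G = (\<lambda>l. xsq (xs ! (l - 1)) + hscale ((-1) ^ (m - l)) (xi (xs ! (l - 1))))"
  have up: "[1..<k+1] = 1 # map Suc [1..<m+1]"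
    by (simp add: k map_Suc_upt upt_conv_Cons del: upt_Suc)
  have mp: "map F (map Suc [1..<m+1]) = map G [1..<m+1]"
    unfolding map_map by (rule map_cong[OF refl]) (auto simp: F_def G_def k)
  have "hprod (map F [1..<k+1]) = hmul (F 1) (hprod (map G [1..<m+1]))"
    by (simp only: up list.map(2) mp hprod.simps)
  also have "\<dots> = pf 0 (x # xs)"
    using Cons.IH[OF m] by (simp add: F_def G_def k m fac_def)
  finally show ?case unfolding F_def .
qed

lemma ufac_pf: "finite I \<Longrightarrow> card I = k \<Longrightarrow> ufac k I = pf 0 (sorted_list_of_set I)"
  unfolding ufac_def Let_def by (rule ufac_pf_aux) simp

lemma pf_append: "pf b (xs @ ys) = hmul (pf (b + length ys) xs) (pf b ys)"
proof (induction xs)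
  case Nil then show ?case by simp
next
  case (Cons x xs)
  then show ?case
    by (simp add: hmul_assoc fin_fac fin_pf algebra_simps)
qed

definition sg :: "uh \<Rightarrow> uh" where
  "sg f = hpart 0 f + hscale (-1) (hpart 1 f)"

lemma sg_add: "sg (f + g) = sg f + sg g"
  by (simp add: sg_def hpart_add hscale_add algebra_simps)

lemma sg_zero[simp]: "sg 0 = 0"
  by (simp add: sg_def)

lemma sg_sum: "sg (sum F X) = (\<Sum>x\<in>X. sg (F x))"
  by (induction X rule: infinite_finite_induct) (auto simp: sg_add)

lemma sg_hom0: "hom 0 f \<Longrightarrow> sg f = f"
  by (simp add: sg_def hpart_hom)

lemma sg_hom1: "hom 1 f \<Longrightarrow> sg f = hscale (-1) f"
  by (simp add: sg_def hpart_hom)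

lemma sg_scale: "sg (hscale c f) = hscale c (sg f)"
  by (simp add: sg_def hpart_scale hscale_add)

lemma hom01: "hom e f \<Longrightarrow> e \<in> {0,1} \<Longrightarrow> sg f = hscale ((-1) ^ e) f"
  using sg_hom0 sg_hom1 by auto

lemma sg_hmul:
  assumes "fin f" "fin g"
  shows "sg (hmul f g) = hmul (sg f) (sg g)"
proof -
  have ff: "fin (hpart e f)" "fin (hpart e g)" for e
    using assms fin_hpart by auto
  have t: "sg (hmul (hpart e1 f) (hpart e2 g)) = hmul (sg (hpart e1 f)) (sg (hpart e2 g))"
    if "e1 \<in> {0,1}" "e2 \<in> {0,1}" for e1 e2
  proof -
    have h: "hom ((e1 + e2) mod 2) (hmul (hpart e1 f) (hpart e2 g))"
      by (rule hom_hmul[OF ff hom_hpart hom_hpart])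
    have "sg (hmul (hpart e1 f) (hpart e2 g)) = hscale ((-1) ^ ((e1 + e2) mod 2)) (hmul (hpart e1 f) (hpart e2 g))"
      by (rule hom01[OF h]) auto
    also have "\<dots> = hscale ((-1) ^ e1 * (-1) ^ e2) (hmul (hpart e1 f) (hpart e2 g))"
      using that by auto
    also have "\<dots> = hmul (sg (hpart e1 f)) (sg (hpart e2 g))"
      using that by (simp add: hom01[OF hom_hpart] hmul_scale_left hmul_scale_right mult.commute)
    finally show ?thesis .
  qed
  have "sg (hmul f g) = sg (hmul (hpart 0 f + hpart 1 f) (hpart 0 g + hpart 1 g))"
    using hpart_split by metis
  also have "\<dots> = sg (hmul (hpart 0 f) (hpart 0 g)) + sg (hmul (hpart 0 f) (hpart 1 g)) +
     (sg (hmul (hpart 1 f) (hpart 0 g)) + sg (hmul (hpart 1 f) (hpart 1 g)))"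
    by (simp add: hmul_add_left hmul_add_right sg_add)
  also have "\<dots> = hmul (sg (hpart 0 f + hpart 1 f)) (sg (hpart 0 g + hpart 1 g))"
    by (simp add: t sg_add hmul_add_left hmul_add_right)
  also have "\<dots> = hmul (sg f) (sg g)"
    using hpart_split by metis
  finally show ?thesis .
qed

lemma sg_hone: "sg hone = hone"
  by (rule sg_hom0[OF hom_hone])

lemma sg_fac: "sg (fac e x) = fac (Suc e) x"
  by (simp add: fac_def sg_add sg_scale sg_hom0[OF hom_xsq] sg_hom1[OF hom_xi])

lemma pf_Suc: "pf (Suc b) xs = sg (pf b xs)"
  by (induction xs) (simp_all add: sg_hone sg_hmul fin_fac fin_pf sg_fac)

lemma pf_pow: "pf b xs = (sg ^^ b) (pf 0 xs)"
  by (induction b) (simp_all add: pf_Suc)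

lemma sgpow_sum: "(sg ^^ b) (sum F X) = (\<Sum>x\<in>X. (sg ^^ b) (F x))"
  by (induction b) (simp_all add: sg_sum)

lemma W_sg: "f \<in> W m \<Longrightarrow> sg f \<in> W m"
  unfolding sg_def by (intro W.add W.scale W_hpart)

lemma W_sgpow: "f \<in> W m \<Longrightarrow> (sg ^^ b) f \<in> W m"
  by (induction b) (simp_all add: W_sg)

lemma sh_fac: "sh i (fac e x) = fac e (i + x)"
  by (simp add: fac_def sh_add sh_scale sh_xi sh_xsq)

lemma sh_pf: "sh i (pf b xs) = pf b (map ((+) i) xs)"
  by (induction xs) (simp_all add: sh_hmul fin_fac fin_pf sh_fac)

lemma sorted_union:
  fixes i j :: nat and I1 I2 :: "nat set"
  assumes "I1 \<subseteq> {1..i}" "I2 \<subseteq> {1..j}"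
  shows "sorted_list_of_set (I1 \<union> (+) i ` I2) =
    sorted_list_of_set I1 @ map ((+) i) (sorted_list_of_set I2)"
proof -
  have f1: "finite I1" using assms(1) by (rule finite_subset) simp
  have f2: "finite I2" using assms(2) by (rule finite_subset) simp
  let ?L = "sorted_list_of_set I1 @ map ((+) i) (sorted_list_of_set I2)"
  have "sorted ?L"
    unfolding sorted_append using assms f1 f2
    by (auto simp: sorted_map intro: sorted_sorted_list_of_set)
  moreover have "distinct ?L"
    unfolding distinct_append using assms f1 f2
    by (auto simp: distinct_map inj_on_def) (use assms in fastforce)
  moreover have "set ?L = I1 \<union> (+) i ` I2" using f1 f2 by simp
  ultimately show ?thesis
    using f1 f2 by (intro sorted_distinct_set_unique) auto
qed

lemma card_union_shift:
  fixes i j :: nat and I1 I2 :: "nat set"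
  assumes "I1 \<subseteq> {1..i}" "I2 \<subseteq> {1..j}"
  shows "card (I1 \<union> (+) i ` I2) = card I1 + card I2"
proof -
  have f1: "finite I1" using assms(1) by (rule finite_subset) simp
  have f2: "finite I2" using assms(2) by (rule finite_subset) simp
  have "I1 \<inter> (+) i ` I2 = {}" using assms by fastforce
  then have "card (I1 \<union> (+) i ` I2) = card I1 + card ((+) i ` I2)"
    using f1 f2 by (simp add: card_Un_disjoint)
  also have "card ((+) i ` I2) = card I2" by (simp add: card_image inj_on_def)
  finally show ?thesis .
qed

lemma ufac_split:
  fixes i j :: nat and I1 I2 :: "nat set"
  assumes "I1 \<subseteq> {1..i}" "I2 \<subseteq> {1..j}" "card I1 + card I2 = k"
  shows "ufac k (I1 \<union> (+) i ` I2) =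
    hmul ((sg ^^ card I2) (ufac (card I1) I1)) (sh i (ufac (card I2) I2))"
proof -
  have f1: "finite I1" using assms(1) by (rule finite_subset) simp
  have f2: "finite I2" using assms(2) by (rule finite_subset) simp
  have "ufac k (I1 \<union> (+) i ` I2) = pf 0 (sorted_list_of_set I1 @ map ((+) i) (sorted_list_of_set I2))"
    using assms f1 f2 by (simp add: ufac_pf card_union_shift sorted_union)
  also have "\<dots> = hmul (pf (card I2) (sorted_list_of_set I1)) (pf 0 (map ((+) i) (sorted_list_of_set I2)))"
    by (simp add: pf_append)
  also have "\<dots> = hmul ((sg ^^ card I2) (ufac (card I1) I1)) (sh i (ufac (card I2) I2))"
    using f1 f2 by (simp add: pf_pow[of "card I2"] sh_pf ufac_pf)
  finally show ?thesis .
qed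

definition Aset :: "nat \<Rightarrow> nat \<Rightarrow> nat set set" where
  "Aset m a = {I. I \<subseteq> {1..m} \<and> card I = a}"

lemma finite_Aset: "finite (Aset m a)"
  unfolding Aset_def by (rule finite_subset[of _ "Pow {1..m}"]) auto

lemma bij_split:
  fixes i j n k :: nat
  assumes "i + j = n"
  shows "bij_betw (\<lambda>z. fst (snd z) \<union> (+) i ` snd (snd z))
     (SIGMA a:{0..k}. Aset i a \<times> Aset j (k - a)) (Aset n k)"
proof (rule bij_betw_byWitness[where f' = "\<lambda>I. (card (I \<inter> {1..i}), I \<inter> {1..i}, (\<lambda>x. x - i) ` (I - {1..i}))"])
  show "\<forall>z\<in>(SIGMA a:{0..k}. Aset i a \<times> Aset j (k - a)).
     (card ((fst (snd z) \<union> (+) i ` snd (snd z)) \<inter> {1..i}), (fst (snd z) \<union> (+) i ` snd (snd z)) \<inter> {1..i},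
      (\<lambda>x. x - i) ` ((fst (snd z) \<union> (+) i ` snd (snd z)) - {1..i})) = z"
  proof
    fix z assume z: "z \<in> (SIGMA a:{0..k}. Aset i a \<times> Aset j (k - a))"
    obtain a I1 I2 where zz: "z = (a, I1, I2)" by (cases z) auto
    have h: "I1 \<subseteq> {1..i}" "card I1 = a" "I2 \<subseteq> {1..j}" using z zz by (auto simp: Aset_def)
    have e1: "(I1 \<union> (+) i ` I2) \<inter> {1..i} = I1" using h by fastforce
    have e2: "(I1 \<union> (+) i ` I2) - {1..i} = (+) i ` I2" using h by fastforce
    have e3: "(\<lambda>x. x - i) ` ((+) i ` I2) = I2" by (simp add: image_image)
    show "(card ((fst (snd z) \<union> (+) i ` snd (snd z)) \<inter> {1..i}), (fst (snd z) \<union> (+) i ` snd (snd z)) \<inter> {1..i},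
      (\<lambda>x. x - i) ` ((fst (snd z) \<union> (+) i ` snd (snd z)) - {1..i})) = z"
      unfolding zz using e1 e2 e3 h by simp
  qed
next
  show "\<forall>I\<in>Aset n k. fst (snd (card (I \<inter> {1..i}), I \<inter> {1..i}, (\<lambda>x. x - i) ` (I - {1..i}))) \<union>
      (+) i ` snd (snd (card (I \<inter> {1..i}), I \<inter> {1..i}, (\<lambda>x. x - i) ` (I - {1..i}))) = I"
  proof
    fix I assume I: "I \<in> Aset n k"
    have "(+) i ` (\<lambda>x. x - i) ` (I - {1..i}) = I - {1..i}"
    proof -
      have "(+) i ` (\<lambda>x. x - i) ` (I - {1..i}) = (\<lambda>x. i + (x - i)) ` (I - {1..i})" by (simp add: image_image)
      also have "\<dots> = (\<lambda>x. x) ` (I - {1..i})"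
        using I by (intro image_cong refl) (auto simp: Aset_def)
      finally show ?thesis by simp
    qed
    then show "fst (snd (card (I \<inter> {1..i}), I \<inter> {1..i}, (\<lambda>x. x - i) ` (I - {1..i}))) \<union>
      (+) i ` snd (snd (card (I \<inter> {1..i}), I \<inter> {1..i}, (\<lambda>x. x - i) ` (I - {1..i}))) = I"
      by auto
  qed
next
  show "(\<lambda>z. fst (snd z) \<union> (+) i ` snd (snd z)) ` (SIGMA a:{0..k}. Aset i a \<times> Aset j (k - a)) \<subseteq> Aset n k"
  proof
    fix I assume "I \<in> (\<lambda>z. fst (snd z) \<union> (+) i ` snd (snd z)) ` (SIGMA a:{0..k}. Aset i a \<times> Aset j (k - a))"
    then obtain a I1 I2 where I: "I = I1 \<union> (+) i ` I2" "a \<le> k" "I1 \<subseteq> {1..i}" "card I1 = a"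
      "I2 \<subseteq> {1..j}" "card I2 = k - a"
      by (auto simp: Aset_def)
    have "card I = k" using I card_union_shift[OF I(3) I(5)] by simp
    moreover have "I \<subseteq> {1..n}" using I assms by auto
    ultimately show "I \<in> Aset n k" by (simp add: Aset_def)
  qed
next
  show "(\<lambda>I. (card (I \<inter> {1..i}), I \<inter> {1..i}, (\<lambda>x. x - i) ` (I - {1..i}))) ` Aset n k
     \<subseteq> (SIGMA a:{0..k}. Aset i a \<times> Aset j (k - a))"
  proof
    fix z assume "z \<in> (\<lambda>I. (card (I \<inter> {1..i}), I \<inter> {1..i}, (\<lambda>x. x - i) ` (I - {1..i}))) ` Aset n k"
    then obtain I where z: "z = (card (I \<inter> {1..i}), I \<inter> {1..i}, (\<lambda>x. x - i) ` (I - {1..i}))"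
      and I: "I \<subseteq> {1..n}" "card I = k" by (auto simp: Aset_def)
    have fI: "finite I" using I(1) by (rule finite_subset) simp
    have c1: "card (I \<inter> {1..i}) \<le> k" using I fI by (metis card_mono inf_le1)
    have inj: "inj_on (\<lambda>x. x - i) (I - {1..i})"
      using I by (auto simp: inj_on_def)
    have "card ((\<lambda>x. x - i) ` (I - {1..i})) = card (I - {1..i})"
      by (rule card_image[OF inj])
    also have "\<dots> = card I - card (I \<inter> {1..i})"
      using fI by (simp add: card_Diff_subset_Int)
    finally have c2: "card ((\<lambda>x. x - i) ` (I - {1..i})) = k - card (I \<inter> {1..i})" using I by simp
    have s2: "(\<lambda>x. x - i) ` (I - {1..i}) \<subseteq> {1..j}"
    proof
      fix y assume "y \<in> (\<lambda>x. x - i) ` (I - {1..i})"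
      then obtain x where x: "x \<in> I" "x \<notin> {1..i}" "y = x - i" by auto
      have "x \<in> {1..n}" using I(1) x(1) by blast
      then show "y \<in> {1..j}" using x assms by auto
    qed
    show "z \<in> (SIGMA a:{0..k}. Aset i a \<times> Aset j (k - a))"
      unfolding z using c1 c2 s2 by (auto simp: Aset_def)
  qed
qed

lemma ufull_Aset: "ufull m k = (\<Sum>I\<in>Aset m k. ufac k I)"
  by (simp add: ufull_def Aset_def)

lemma ufull_split:
  fixes i j n k :: nat
  assumes "i + j = n"
  shows "ufull n k = (\<Sum>a\<in>{0..k}. hmul ((sg ^^ (k - a)) (ufull i a)) (sh i (ufull j (k - a))))"
proof -
  have "(\<Sum>a\<in>{0..k}. hmul ((sg ^^ (k - a)) (ufull i a)) (sh i (ufull j (k - a)))) =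
    (\<Sum>a\<in>{0..k}. \<Sum>I1\<in>Aset i a. \<Sum>I2\<in>Aset j (k - a).
       hmul ((sg ^^ (k - a)) (ufac a I1)) (sh i (ufac (k - a) I2)))"
    by (intro sum.cong refl) (simp only: ufull_Aset sgpow_sum sh_sum hmul_sum_left, simp only: hmul_sum_right)
  also have "\<dots> = (\<Sum>a\<in>{0..k}. \<Sum>I1\<in>Aset i a. \<Sum>I2\<in>Aset j (k - a). ufac k (I1 \<union> (+) i ` I2))"
  proof (intro sum.cong refl)
    fix a I1 I2 assume a: "a \<in> {0..k}" and I1: "I1 \<in> Aset i a" and I2: "I2 \<in> Aset j (k - a)"
    have h: "I1 \<subseteq> {1..i}" "card I1 = a" "I2 \<subseteq> {1..j}" "card I2 = k - a" using I1 I2 by (auto simp: Aset_def)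
    have "ufac k (I1 \<union> (+) i ` I2) = hmul ((sg ^^ card I2) (ufac (card I1) I1)) (sh i (ufac (card I2) I2))"
      by (rule ufac_split) (use h a in auto)
    then show "hmul ((sg ^^ (k - a)) (ufac a I1)) (sh i (ufac (k - a) I2)) = ufac k (I1 \<union> (+) i ` I2)"
      using h by simp
  qed
  also have "\<dots> = (\<Sum>a\<in>{0..k}. \<Sum>p\<in>Aset i a \<times> Aset j (k - a). ufac k (fst p \<union> (+) i ` snd p))"
    by (intro sum.cong refl) (simp add: sum.cartesian_product split_beta)
  also have "\<dots> = (\<Sum>z\<in>(SIGMA a:{0..k}. Aset i a \<times> Aset j (k - a)). ufac k (fst (snd z) \<union> (+) i ` snd (snd z)))"
    by (subst sum.Sigma) (auto simp: finite_Aset split_beta)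
  also have "\<dots> = (\<Sum>I\<in>Aset n k. ufac k I)"
    by (rule sum.reindex_bij_betw[OF bij_split[OF assms]])
  finally show ?thesis by (simp add: ufull_Aset)
qed

lemma W_ufull: "ufull m a \<in> W m"
proof -
  have "ufull m a = u m a 0 + u m a 1" unfolding u_def by (rule hpart_split)
  then show ?thesis using W_u W.add by metis
qed

lemma T_hpart:
  assumes A: "A \<in> W i" and B: "B \<in> W j"
  shows "hpart e (hmul A (sh i B)) \<in> Wtensor i j"
proof -
  have t: "hpart e (hmul (hpart e1 A) (sh i (hpart e2 B))) \<in> Wtensor i j" for e1 e2
  proof -
    have fA: "fin (hpart e1 A)" using A W_fin fin_hpart by blast
    have fB: "fin (sh i (hpart e2 B))" using B W_fin fin_hpart fin_sh by blast
    have h: "hom ((e1 + e2) mod 2) (hmul (hpart e1 A) (sh i (hpart e2 B)))"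
      by (rule hom_hmul[OF fA fB hom_hpart hom_sh[OF hom_hpart]])
    have g: "hmul (hpart e1 A) (sh i (hpart e2 B)) \<in> Wtensor i j"
      by (rule T_gen) (use A B W_hpart in auto)
    have z: "(0::uh) \<in> Wtensor i j" unfolding Wtensor_def by (rule hspan.zero)
    show ?thesis
    proof (cases "e = (e1 + e2) mod 2")
      case True then show ?thesis using hpart_hom[OF h, of e] g by simp
    next
      case False then show ?thesis using hpart_hom[OF h, of e] z by simp
    qed
  qed
  have "hmul A (sh i B) = hmul (hpart 0 A + hpart 1 A) (sh i (hpart 0 B + hpart 1 B))"
    using hpart_split by metis
  then have eq: "hpart e (hmul A (sh i B)) =
     hpart e (hmul (hpart 0 A) (sh i (hpart 0 B))) + hpart e (hmul (hpart 0 A) (sh i (hpart 1 B))) +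
     (hpart e (hmul (hpart 1 A) (sh i (hpart 0 B))) + hpart e (hmul (hpart 1 A) (sh i (hpart 1 B))))"
    by (simp add: hmul_add_left hmul_add_right sh_add hpart_add)
  show ?thesis unfolding eq Wtensor_def
    by (intro hspan.add) (rule t[unfolded Wtensor_def])+
qed

lemma main_u:
  assumes "1 \<le> i" "1 \<le> j" "i + j = n"
  shows "u n k e \<in> Wtensor i j"
proof -
  have "u n k e = (\<Sum>a\<in>{0..k}. hpart e (hmul ((sg ^^ (k - a)) (ufull i a)) (sh i (ufull j (k - a)))))"
    unfolding u_def ufull_split[OF assms(3)] by (rule hpart_sum)
  also have "\<dots> \<in> Wtensor i j"
    unfolding Wtensor_def[symmetric]
    by (intro hspan_sum[of _ _ "{hmul a (sh i b) | a b. a \<in> W i \<and> b \<in> W j}", folded Wtensor_def] T_hpart W_sgpow W_ufull)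
  finally show ?thesis .
qed

theorem lemma3p3:
  fixes i j n :: nat
  assumes "1 \<le> i" and "1 \<le> j" and "i + j = n"
  shows "W n \<subseteq> Wtensor i j"
proof
  fix f assume "f \<in> W n"
  then show "f \<in> Wtensor i j"
  proof (induction rule: W.induct)
    case (gen k e)
    then show ?case using main_u[OF assms] by blast
  next
    case one then show ?case by (rule T_one)
  next
    case (add f g) then show ?case unfolding Wtensor_def by (blast intro: hspan.add)
  next
    case (scale f c) then show ?case unfolding Wtensor_def by (blast intro: hspan.scale)
  next
    case (mul f g) then show ?case by (blast intro: T_mul)
  qed
qed

end
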